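(* Let $G=(V,E)$ be a finite simple graph and let $\mathcal{F}$ be a (possibly empty) collection of minimal forts of $G$. Consider the integer program $\mathrm{MFF}(G,\mathcal{F})$: $$\text{minimize }\sum_{v\in V}x_v\ \text{ subject to }\ \sum_{v\in V}x_v\geq1,\quad x_u-x_v+\sum_{w\in N(u)\setminus\{v\}}x_w\geq0\ \ \forall v\in V,\ u\in N(v),\quad \sum_{v\in F}x_v\leq|F|-1\ \ \forall F\in\mathcal{F},\quad x\in\{0,1\}^V.$$ Suppose $\mathrm{MFF}(G,\mathcal{F})$ is feasible, let $x$ be an optimal solution, and let $F'=\{v\in V\colon x_v=1\}$. Then $\mathcal{F}\cup\{F'\}$ is a collection of minimal forts of $G$.
   Context: $N(u)$ denotes the neighborhood of $u$. A fort of $G$ is a non-empty set $F\subseteq V$ such that no vertex $u\in V\setminus F$ has exactly one neighbor in $F$. A fort is minimal if no fort of $G$ is a proper subset of it. *)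

theory Defs
  imports Main
begin

definition simple_graph :: "'a set \<Rightarrow> ('a \<Rightarrow> 'a \<Rightarrow> bool) \<Rightarrow> bool" where
  "simple_graph V E \<longleftrightarrow> finite V \<and> (\<forall>u v. E u v \<longrightarrow> E v u)
     \<and> (\<forall>u. \<not> E u u) \<and> (\<forall>u v. E u v \<longrightarrow> u \<in> V \<and> v \<in> V)"

definition nbhd :: "'a set \<Rightarrow> ('a \<Rightarrow> 'a \<Rightarrow> bool) \<Rightarrow> 'a \<Rightarrow> 'a set" where
  "nbhd V E u = {w \<in> V. E u w}"

definition is_fort :: "'a set \<Rightarrow> ('a \<Rightarrow> 'a \<Rightarrow> bool) \<Rightarrow> 'a set \<Rightarrow> bool" where
  "is_fort V E F \<longleftrightarrow> F \<noteq> {} \<and> F \<subseteq> V \<and>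
     (\<forall>u \<in> V - F. card (nbhd V E u \<inter> F) \<noteq> 1)"

definition is_minimal_fort :: "'a set \<Rightarrow> ('a \<Rightarrow> 'a \<Rightarrow> bool) \<Rightarrow> 'a set \<Rightarrow> bool" where
  "is_minimal_fort V E F \<longleftrightarrow> is_fort V E F \<and> (\<forall>F'. is_fort V E F' \<longrightarrow> \<not> F' \<subset> F)"

definition mff_feasible :: "'a set \<Rightarrow> ('a \<Rightarrow> 'a \<Rightarrow> bool) \<Rightarrow> 'a set set \<Rightarrow> ('a \<Rightarrow> int) \<Rightarrow> bool" where
  "mff_feasible V E FF x \<longleftrightarrow>
     (\<forall>v \<in> V. x v \<in> {0, 1}) \<and>
     (\<Sum>v\<in>V. x v) \<ge> 1 \<and>
     (\<forall>v \<in> V. \<forall>u \<in> nbhd V E v. x u - x v + (\<Sum>w \<in> nbhd V E u - {v}. x w) \<ge> 0) \<and>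
     (\<forall>F \<in> FF. (\<Sum>v\<in>F. x v) \<le> int (card F) - 1)"

definition mff_optimal :: "'a set \<Rightarrow> ('a \<Rightarrow> 'a \<Rightarrow> bool) \<Rightarrow> 'a set set \<Rightarrow> ('a \<Rightarrow> int) \<Rightarrow> bool" where
  "mff_optimal V E FF x \<longleftrightarrow> mff_feasible V E FF x \<and>
     (\<forall>y. mff_feasible V E FF y \<longrightarrow> (\<Sum>v\<in>V. x v) \<le> (\<Sum>v\<in>V. y v))"

end

theory Submission
  imports Defs
begin

lemma ind_sum:
  assumes "finite A"
  shows "(\<Sum>v\<in>A. (if v \<in> T then 1 else 0::int)) = int (card (A \<inter> T))"
  using assms by (simp add: sum.If_cases)

lemma x_sum:
  assumes "finite A" "A \<subseteq> V" "\<forall>v \<in> V. x v \<in> {0, 1::int}"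
  shows "(\<Sum>v\<in>A. x v) = int (card (A \<inter> {v. x v = 1}))"
proof -
  have "(\<Sum>v\<in>A. x v) = (\<Sum>v\<in>A. (if v \<in> {v. x v = 1} then 1 else 0::int))"
  proof (rule sum.cong)
    fix v assume "v \<in> A"
    then have "x v \<in> {0,1}" using assms by blast
    then show "x v = (if v \<in> {v. x v = 1} then 1 else 0::int)" by auto
  qed simp
  also have "\<dots> = int (card (A \<inter> {v. x v = 1}))" by (rule ind_sum[OF assms(1)])
  finally show ?thesis .
qed
lemma feasible_fort:
  assumes g: "simple_graph V E" and f: "mff_feasible V E FF x"
  shows "is_fort V E {v \<in> V. x v = 1}"
proof -
  let ?S = "{v \<in> V. x v = 1}"
  have fin: "finite V" using g unfolding simple_graph_def by blast
  have x01: "\<forall>v \<in> V. x v \<in> {0, 1::int}" using f by (simp add: mff_feasible_def)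
  have nbV: "\<And>u. nbhd V E u \<subseteq> V" by (auto simp: nbhd_def)
  have finnb: "\<And>u. finite (nbhd V E u)" using fin nbV finite_subset by metis
  have "?S \<noteq> {}"
  proof
    assume "?S = {}"
    then have "V \<inter> {v. x v = 1} = {}" by auto
    then have "(\<Sum>v\<in>V. x v) = 0" using x_sum[OF fin subset_refl x01] by (metis card.empty of_nat_0)
    with f show False by (simp add: mff_feasible_def)
  qed
  moreover have "\<forall>u \<in> V - ?S. card (nbhd V E u \<inter> ?S) \<noteq> 1"
  proof (intro ballI notI)
    fix u assume u: "u \<in> V - ?S" and c: "card (nbhd V E u \<inter> ?S) = 1"
    have "\<exists>v. nbhd V E u \<inter> ?S = {v}" using c card_1_singleton_iff by (metis One_nat_def)
    then obtain v where v: "nbhd V E u \<inter> ?S = {v}" by blast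
    have vin: "v \<in> nbhd V E u \<inter> ?S" using v by blast
    have vV: "v \<in> V" and xv: "x v = 1" using vin by blast+
    have Euv: "E u v" using vin unfolding nbhd_def by blast
    have "E v u" using Euv g unfolding simple_graph_def by blast
    have uV: "u \<in> V" and xu1: "x u \<noteq> 1" using u by blast+
    have uN: "u \<in> nbhd V E v" unfolding nbhd_def using uV \<open>E v u\<close> by blast
    have "x u \<in> {0,1}" using x01 uV by (rule bspec)
    then have xu: "x u = 0" using xu1 by blast
    have emp: "(nbhd V E u - {v}) \<inter> {w. x w = 1} = {}" using v nbV[of u] by blast
    have sub: "nbhd V E u - {v} \<subseteq> V" using nbV by blast
    have "(\<Sum>w \<in> nbhd V E u - {v}. x w) = int (card ((nbhd V E u - {v}) \<inter> {w. x w = 1}))"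
      using x_sum[of "nbhd V E u - {v}" V x, OF finite_Diff[OF finnb] sub x01] .
    then have s0: "(\<Sum>w \<in> nbhd V E u - {v}. x w) = 0" unfolding emp by simp
    have "x u - x v + (\<Sum>w \<in> nbhd V E u - {v}. x w) \<ge> 0"
      using f vV uN unfolding mff_feasible_def by blast
    then show False using xu xv s0 by linarith
  qed
  moreover have "?S \<subseteq> V" by blast
  ultimately show ?thesis unfolding is_fort_def by blast
qed

lemma fort_feasible:
  assumes g: "simple_graph V E" and T: "is_fort V E T"
    and FFf: "\<forall>F \<in> FF. F \<subseteq> V" and nsub: "\<forall>F \<in> FF. \<not> F \<subseteq> T"
  shows "mff_feasible V E FF (\<lambda>v. if v \<in> T then 1 else 0)"
proof -
  have fin: "finite V" using g unfolding simple_graph_def by blast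
  have TV: "T \<subseteq> V" "T \<noteq> {}" using T by (auto simp: is_fort_def)
  have finT: "finite T" using fin TV finite_subset by metis
  have nbV: "\<And>u. nbhd V E u \<subseteq> V" by (auto simp: nbhd_def)
  have finnb: "\<And>u. finite (nbhd V E u)" using fin nbV finite_subset by metis
  have s1: "(\<Sum>v\<in>V. (if v \<in> T then 1 else 0::int)) \<ge> 1"
  proof -
    have "V \<inter> T = T" using TV by auto
    moreover have "card T \<ge> 1" using finT TV by (simp add: Suc_le_eq card_gt_0_iff)
    ultimately show ?thesis using ind_sum[OF fin, of T] by simp
  qed
  have s2: "\<forall>v \<in> V. \<forall>u \<in> nbhd V E v. (if u \<in> T then 1 else 0::int) - (if v \<in> T then 1 else 0)
      + (\<Sum>w \<in> nbhd V E u - {v}. (if w \<in> T then 1 else 0)) \<ge> 0"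
  proof (intro ballI)
    fix v u assume vV: "v \<in> V" and uN: "u \<in> nbhd V E v"
    have sp: "(\<Sum>w \<in> nbhd V E u - {v}. (if w \<in> T then 1 else 0::int)) = int (card ((nbhd V E u - {v}) \<inter> T))"
      by (rule ind_sum[OF finite_Diff[OF finnb]])
    show "(if u \<in> T then 1 else 0::int) - (if v \<in> T then 1 else 0)
      + (\<Sum>w \<in> nbhd V E u - {v}. (if w \<in> T then 1 else 0)) \<ge> 0"
    proof (cases "v \<in> T \<and> u \<notin> T")
      case True
      have uV: "u \<in> V" and Evu: "E v u" using uN by (auto simp: nbhd_def)
      have "E u v" using Evu g unfolding simple_graph_def by blast
      then have vin: "v \<in> nbhd V E u \<inter> T" using vV True by (auto simp: nbhd_def)
      have "card (nbhd V E u \<inter> T) \<noteq> 1" using T uV True by (auto simp: is_fort_def)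
      moreover have "card (nbhd V E u \<inter> T) \<noteq> 0" using vin finnb by auto
      ultimately have "card (nbhd V E u \<inter> T) \<ge> 2" by linarith
      moreover have "(nbhd V E u - {v}) \<inter> T = (nbhd V E u \<inter> T) - {v}" by auto
      ultimately have "card ((nbhd V E u - {v}) \<inter> T) \<ge> 1" using vin finnb
        by (simp add: card_Diff_singleton)
      then show ?thesis using sp True by simp
    next
      case False
      then show ?thesis using sp by auto
    qed
  qed
  have s3: "\<forall>F \<in> FF. (\<Sum>v\<in>F. (if v \<in> T then 1 else 0::int)) \<le> int (card F) - 1"
  proof
    fix F assume F: "F \<in> FF"
    have finF: "finite F" using FFf F fin finite_subset by metis
    have "F \<inter> T \<subset> F" using nsub F by auto
    then have "card (F \<inter> T) < card F" using finF psubset_card_mono by blast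
    then show "(\<Sum>v\<in>F. (if v \<in> T then 1 else 0::int)) \<le> int (card F) - 1"
      using ind_sum[OF finF, of T] by simp
  qed
  show ?thesis unfolding mff_feasible_def using s1 s2 s3 by auto
qed

theorem theorem6p2:
  fixes V :: "'a set" and E :: "'a \<Rightarrow> 'a \<Rightarrow> bool" and FF :: "'a set set"
    and x :: "'a \<Rightarrow> int"
  assumes "simple_graph V E"
    and "\<forall>F \<in> FF. is_minimal_fort V E F"
    and "\<exists>y. mff_feasible V E FF y"
    and "mff_optimal V E FF x"
  shows "\<forall>F \<in> FF \<union> {{v \<in> V. x v = 1}}. is_minimal_fort V E F"
proof -
  let ?S = "{v \<in> V. x v = 1}"
  have g: "simple_graph V E" by fact
  have fin: "finite V" using g unfolding simple_graph_def by blast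
  have f: "mff_feasible V E FF x" using assms(4) by (simp add: mff_optimal_def)
  have x01: "\<forall>v \<in> V. x v \<in> {0, 1::int}" using f by (simp add: mff_feasible_def)
  have FFf: "\<forall>F \<in> FF. F \<subseteq> V" using assms(2) by (auto simp: is_minimal_fort_def is_fort_def)
  have Sf: "is_fort V E ?S" using feasible_fort[OF g f] .
  have nsubS: "\<forall>F \<in> FF. \<not> F \<subseteq> ?S"
  proof (intro ballI notI)
    fix F assume F: "F \<in> FF" and sub: "F \<subseteq> ?S"
    have finF: "finite F" using FFf F fin finite_subset by metis
    have "(\<Sum>v\<in>F. x v) = int (card (F \<inter> {v. x v = 1}))"
      using x_sum[OF finF _ x01] FFf F by blast
    moreover have "F \<inter> {v. x v = 1} = F" using sub by auto
    moreover have "(\<Sum>v\<in>F. x v) \<le> int (card F) - 1" using f F by (simp add: mff_feasible_def)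
    ultimately show False by simp
  qed
  have "is_minimal_fort V E ?S"
    unfolding is_minimal_fort_def
  proof (intro conjI allI impI notI)
    show "is_fort V E ?S" by fact
  next
    fix T assume T: "is_fort V E T" and Tsub: "T \<subset> ?S"
    have "\<forall>F \<in> FF. \<not> F \<subseteq> T" using nsubS Tsub by blast
    then have fy: "mff_feasible V E FF (\<lambda>v. if v \<in> T then 1 else 0)"
      using fort_feasible[OF g T FFf] by blast
    then have le: "(\<Sum>v\<in>V. x v) \<le> (\<Sum>v\<in>V. (if v \<in> T then 1 else 0::int))"
      using assms(4) by (simp add: mff_optimal_def)
    have "(\<Sum>v\<in>V. x v) = int (card ?S)"
    proof -
      have "V \<inter> {v. x v = 1} = ?S" by auto
      then show ?thesis using x_sum[OF fin subset_refl x01] by simp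
    qed
    moreover have "(\<Sum>v\<in>V. (if v \<in> T then 1 else 0::int)) = int (card T)"
    proof -
      have "V \<inter> T = T" using Tsub by auto
      then show ?thesis using ind_sum[OF fin, of T] by simp
    qed
    moreover have "card T < card ?S" using Tsub fin by (simp add: psubset_card_mono)
    ultimately show False using le by simp
  qed
  then show ?thesis using assms(2) by auto
qed

end
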